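(* For every 3-periodic $P_1P_2P_3$ of $\mathcal{E}$, \[\sum_{i=1}^3\frac{1}{d_{1,i}}=\frac{a^2+b^2+\delta}{ab^2},\] where $d_{1,i}=|P_i-f_1|$. Consequently the sum of distances from $f_1$ to the vertices of the focus-inversive triangle, $\sum_i |P_i^\dagger-f_1|=\rho^2\sum_i 1/d_{1,i}$, is invariant over the family.
   Context: Let $a>b>0$ and let $\mathcal{E}$ be the ellipse $x^2/a^2+y^2/b^2=1$. Set $c=\sqrt{a^2-b^2}$, $\delta=\sqrt{a^4-a^2b^2+b^4}$, and let the foci be $f_1=(-c,0)$, $f_2=(c,0)$. A 3-periodic is a triangle $P_1P_2P_3$ with vertices on $\mathcal{E}$ such that at each vertex the normal to $\mathcal{E}$ bisects the angle formed by the two sides meeting at that vertex; these form a one-parameter family (one through every point of $\mathcal{E}$). Fix $\rho>0$; the focus-inversive triangle has vertices $P_i^\dagger=f_1+(\rho/d_{1,i})^2(P_i-f_1)$. *)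

theory Defs
  imports "HOL-Analysis.Analysis"
begin

definition on_ellipse :: "real \<Rightarrow> real \<Rightarrow> real \<times> real \<Rightarrow> bool" where
  "on_ellipse a b P \<longleftrightarrow> (fst P)^2 / a^2 + (snd P)^2 / b^2 = 1"

text \<open>Normal direction to the ellipse at P (gradient of the defining function, up to factor 2).\<close>
definition ell_normal :: "real \<Rightarrow> real \<Rightarrow> real \<times> real \<Rightarrow> real \<times> real" where
  "ell_normal a b P = (fst P / a^2, snd P / b^2)"

definition cross2 :: "real \<times> real \<Rightarrow> real \<times> real \<Rightarrow> real" where
  "cross2 u v = fst u * snd v - snd u * fst v"

text \<open>The normal line at Q bisects the angle RQS: the internal bisector direction
  (sum of the unit vectors along QR and QS) is parallel to the normal at Q.\<close>
definition normal_bisects :: "real \<Rightarrow> real \<Rightarrow> real \<times> real \<Rightarrow> real \<times> real \<Rightarrow> real \<times> real \<Rightarrow> bool" where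
  "normal_bisects a b Q R S \<longleftrightarrow>
     cross2 (scaleR (1 / norm (R - Q)) (R - Q) + scaleR (1 / norm (S - Q)) (S - Q))
            (ell_normal a b Q) = 0"

definition three_periodic :: "real \<Rightarrow> real \<Rightarrow> real \<times> real \<Rightarrow> real \<times> real \<Rightarrow> real \<times> real \<Rightarrow> bool" where
  "three_periodic a b P1 P2 P3 \<longleftrightarrow>
     P1 \<noteq> P2 \<and> P2 \<noteq> P3 \<and> P1 \<noteq> P3 \<and>
     on_ellipse a b P1 \<and> on_ellipse a b P2 \<and> on_ellipse a b P3 \<and>
     normal_bisects a b P1 P2 P3 \<and> normal_bisects a b P2 P3 P1 \<and> normal_bisects a b P3 P1 P2"

definition inv_pt :: "real \<times> real \<Rightarrow> real \<Rightarrow> real \<times> real \<Rightarrow> real \<times> real" where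
  "inv_pt f \<rho> P = f + scaleR ((\<rho> / dist P f)^2) (P - f)"

end

theory Submission
  imports Defs
begin


definition Dq :: "real \<Rightarrow> real \<Rightarrow> real \<Rightarrow> real \<Rightarrow> real" where
  "Dq C1 S1 C2 S2 = (C1-C2)^2 + (S1-S2)^2"
definition Mq :: "real \<Rightarrow> real \<Rightarrow> real \<Rightarrow> real \<Rightarrow> real \<Rightarrow> real \<Rightarrow> real" where
  "Mq a b C1 S1 C2 S2 = b^2 + (a^2-b^2)*(1 - C1*C2 + S1*S2)/2"

lemma norm_sq:
  "(norm ((a*C2,b*S2) - (a*C1,b*S1)))^2 = a^2*(C2-C1)^2 + b^2*(S2-S1)^2"
    by (simp add: norm_Pair power_mult_distrib right_diff_distrib[symmetric])

lemma chord_len: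
  assumes "C1^2+S1^2=1" "C2^2+S2^2=1"
  shows "(norm ((a*C2,b*S2) - (a*C1,b*S1)))^2 = Dq C1 S1 C2 S2 * Mq a b C1 S1 C2 S2"
proof -
  have "a^2*(C2-C1)^2 + b^2*(S2-S1)^2 = Dq C1 S1 C2 S2 * Mq a b C1 S1 C2 S2"
    using assms unfolding Dq_def Mq_def by algebra
  thus ?thesis using norm_sq by simp
qed

lemma Dq_pos: assumes "(C2,S2) \<noteq> (C1,S1)" shows "Dq C1 S1 C2 S2 > 0"
  using assms unfolding Dq_def
  by (smt (verit) prod.inject power2_less_0 sum_power2_eq_zero_iff)

lemma Mq_pos: assumes "a > b" "b > 0" "C1^2+S1^2=1" "C2^2+S2^2=1"
  shows "Mq a b C1 S1 C2 S2 > 0"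
proof -
  have h: "(C1 - C2)^2 + (S1 + S2)^2 = 2 - 2*C1*C2 + 2*S1*S2" using assms(3,4) by algebra
  have "(C1 - C2)^2 + (S1 + S2)^2 \<ge> 0" by simp
  hence "1 - C1*C2 + S1*S2 \<ge> 0" using h by linarith
  moreover have "a^2 - b^2 > 0" using assms by (simp add: power_strict_mono)
  ultimately show ?thesis unfolding Mq_def using assms(2) by (simp add: add_pos_nonneg)
qed

lemma bisect_key:
  assumes ab: "a > b" "b > 0" and u1: "C1^2+S1^2=1" and u2: "C2^2+S2^2=1" and u3: "C3^2+S3^2=1"
    and d2: "(C2,S2) \<noteq> (C1,S1)" and d3: "(C3,S3) \<noteq> (C1,S1)"
    and nb: "normal_bisects a b (a*C1,b*S1) (a*C2,b*S2) (a*C3,b*S3)"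
  shows "Dq C1 S1 C2 S2 * Mq a b C1 S1 C3 S3 = Dq C1 S1 C3 S3 * Mq a b C1 S1 C2 S2"
proof -
  have a0: "a > 0" using ab by simp
  define lR where "lR = norm ((a*C2,b*S2) - (a*C1,b*S1))"
  define lS where "lS = norm ((a*C3,b*S3) - (a*C1,b*S1))"
  have D2: "Dq C1 S1 C2 S2 > 0" using Dq_pos[OF d2] .
  have D3: "Dq C1 S1 C3 S3 > 0" using Dq_pos[OF d3] .
  have M2: "Mq a b C1 S1 C2 S2 > 0" using Mq_pos ab u1 u2 by blast
  have M3: "Mq a b C1 S1 C3 S3 > 0" using Mq_pos ab u1 u3 by blast
  have lR2: "lR^2 = Dq C1 S1 C2 S2 * Mq a b C1 S1 C2 S2" unfolding lR_def using chord_len u1 u2 .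
  have lS2: "lS^2 = Dq C1 S1 C3 S3 * Mq a b C1 S1 C3 S3" unfolding lS_def using chord_len u1 u3 .
  have lRpos: "lR > 0"
  proof -
    have "lR \<ge> 0" unfolding lR_def by simp
    moreover have "lR^2 > 0" using lR2 D2 M2 by simp
    ultimately show ?thesis by (metis less_eq_real_def power2_eq_square mult_zero_left less_irrefl)
  qed
  have lSpos: "lS > 0"
  proof -
    have "lS \<ge> 0" unfolding lS_def by simp
    moreover have "lS^2 > 0" using lS2 D3 M3 by simp
    ultimately show ?thesis by (metis less_eq_real_def power2_eq_square mult_zero_left less_irrefl)
  qed
  have lR2': "lR^2 = a^2*(C2-C1)^2 + b^2*(S2-S1)^2" unfolding lR_def by (rule norm_sq)
  have lS2': "lS^2 = a^2*(C3-C1)^2 + b^2*(S3-S1)^2" unfolding lS_def by (rule norm_sq)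
  define r1 where "r1 = a*(C2-C1)/lR"
  define r2 where "r2 = b*(S2-S1)/lR"
  define s1 where "s1 = a*(C3-C1)/lS"
  define s2 where "s2 = b*(S3-S1)/lS"
  define n1 where "n1 = C1/a"
  define n2 where "n2 = S1/b"
  have "r1^2 + r2^2 = (a^2*(C2-C1)^2 + b^2*(S2-S1)^2)/lR^2" unfolding r1_def r2_def
    by (simp add: power_divide add_divide_distrib power_mult_distrib)
  moreover have "lR^2 \<noteq> 0" using lRpos by simp
  ultimately have r: "r1^2 + r2^2 = 1" using lR2' by (metis divide_self)
  have "s1^2 + s2^2 = (a^2*(C3-C1)^2 + b^2*(S3-S1)^2)/lS^2" unfolding s1_def s2_def
    by (simp add: power_divide add_divide_distrib power_mult_distrib)
  moreover have "lS^2 \<noteq> 0" using lSpos by simp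
  ultimately have s: "s1^2 + s2^2 = 1" using lS2' by (metis divide_self)
  have cr: "(r1+s1)*n2 - (r2+s2)*n1 = 0"
    using nb unfolding normal_bisects_def cross2_def ell_normal_def lR_def[symmetric] lS_def[symmetric]
      r1_def r2_def s1_def s2_def n1_def n2_def using a0 ab(2) lRpos lSpos
    apply (simp add: field_simps)
    apply (rule mult_left_cancel[where c="a*b", THEN iffD1])
    using a0 ab(2) apply simp
    apply (simp add: algebra_simps power2_eq_square)
    done
  define pR where "pR = r1*n1 + r2*n2"
  define pS where "pS = s1*n1 + s2*n2"
  have pR: "pR = - Dq C1 S1 C2 S2/(2*lR)"
  proof -
    have "pR = (C1*C2 + S1*S2 - (C1^2+S1^2))/lR" unfolding pR_def r1_def r2_def n1_def n2_def
      using a0 ab(2) lRpos by (simp add: field_simps power2_eq_square)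
    also have "\<dots> = - Dq C1 S1 C2 S2/(2*lR)"
    proof -
      have "2*(C1*C2 + S1*S2 - (C1^2+S1^2)) = - Dq C1 S1 C2 S2" using u1 u2 unfolding Dq_def by algebra
      hence "C1*C2 + S1*S2 - (C1^2+S1^2) = - Dq C1 S1 C2 S2/2" by simp
      thus ?thesis by simp
    qed
    finally show ?thesis .
  qed
  have pS: "pS = - Dq C1 S1 C3 S3/(2*lS)"
  proof -
    have "pS = (C1*C3 + S1*S3 - (C1^2+S1^2))/lS" unfolding pS_def s1_def s2_def n1_def n2_def
      using a0 ab(2) lSpos by (simp add: field_simps power2_eq_square)
    also have "\<dots> = - Dq C1 S1 C3 S3/(2*lS)"
    proof -
      have "2*(C1*C3 + S1*S3 - (C1^2+S1^2)) = - Dq C1 S1 C3 S3" using u1 u3 unfolding Dq_def by algebra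
      hence "C1*C3 + S1*S3 - (C1^2+S1^2) = - Dq C1 S1 C3 S3/2" by simp
      thus ?thesis by simp
    qed
    finally show ?thesis .
  qed
  have pRn: "pR < 0" using pR D2 lRpos by (simp add: divide_pos_pos)
  have pSn: "pS < 0" using pS D3 lSpos by (simp add: divide_pos_pos)
  have bc: "((r1+s1)^2+(r2+s2)^2)*(pR - pS) =
      ((r1+s1)*(r2-s2) - (r2+s2)*(r1-s1)) * ((r1+s1)*n2 - (r2+s2)*n1)
      + ((r1+s1)*(r1-s1)+(r2+s2)*(r2-s2))*((r1+s1)*n1+(r2+s2)*n2)"
    unfolding pR_def pS_def by algebra
  have uv: "(r1+s1)*(r1-s1)+(r2+s2)*(r2-s2) = 0" using r s by algebra
  have z: "((r1+s1)^2+(r2+s2)^2)*(pR - pS) = 0" using bc uv cr by simp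
  have eq: "pR = pS"
  proof (rule ccontr)
    assume "pR \<noteq> pS"
    hence "(r1+s1)^2+(r2+s2)^2 = 0" using z by simp
    hence "r1+s1 = 0" "r2+s2 = 0" by (simp_all add: sum_power2_eq_zero_iff)
    hence "pS = - pR" unfolding pR_def pS_def by algebra
    thus False using pRn pSn by simp
  qed
  hence "Dq C1 S1 C2 S2 * lS = Dq C1 S1 C3 S3 * lR" using pR pS lRpos lSpos
    by (simp add: field_simps)
  hence "(Dq C1 S1 C2 S2)^2 * lS^2 = (Dq C1 S1 C3 S3)^2 * lR^2"
    by (metis power_mult_distrib)
  hence "(Dq C1 S1 C2 S2 * Dq C1 S1 C3 S3) * (Dq C1 S1 C2 S2 * Mq a b C1 S1 C3 S3)
       = (Dq C1 S1 C2 S2 * Dq C1 S1 C3 S3) * (Dq C1 S1 C3 S3 * Mq a b C1 S1 C2 S2)"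
    unfolding lR2 lS2 by (simp add: power2_eq_square algebra_simps)
  moreover have "Dq C1 S1 C2 S2 * Dq C1 S1 C3 S3 \<noteq> 0" using D2 D3 by simp
  ultimately show ?thesis by simp
qed



lemma core:
  fixes C1 S1 C2 S2 C3 S3 q :: real
  assumes u1: "C1^2+S1^2=1" and u2: "C2^2+S2^2=1" and u3: "C3^2+S3^2=1"
    and d12: "(C1,S1) \<noteq> (C2,S2)" and d13: "(C1,S1) \<noteq> (C3,S3)" and d23: "(C2,S2) \<noteq> (C3,S3)"
    and F1: "(C1*C2+S1*S2) - (C1*C3+S1*S3) - q*(C1*C2 - S1*S2) + q*(C1*C3 - S1*S3) = 0"
    and F2: "(C2*C1+S2*S1) - (C2*C3+S2*S3) - q*(C2*C1 - S2*S1) + q*(C2*C3 - S2*S3) = 0"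
  shows "\<exists>\<tau>. C1+C2+C3 = -q*\<tau> \<and> 4*(C1*C2+C1*C3+C2*C3) = q^2-2*q-3
           \<and> 4*(S1*S2+S1*S3+S2*S3) = q^2+2*q-3 \<and> 4*(C1*C2*C3) = \<tau>*(1+q)^2"
proof -
  define z1 where "z1 = Complex C1 S1"
  define z2 where "z2 = Complex C2 S2"
  define z3 where "z3 = Complex C3 S3"
  define w1 where "w1 = cnj z1"
  define w2 where "w2 = cnj z2"
  define w3 where "w3 = cnj z3"
  define x1 where "x1 = complex_of_real C1"
  define x2 where "x2 = complex_of_real C2"
  define x3 where "x3 = complex_of_real C3"
  define y1 where "y1 = complex_of_real S1"
  define y2 where "y2 = complex_of_real S2"
  define y3 where "y3 = complex_of_real S3"
  define Q where "Q = complex_of_real q"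
  have zw1: "z1*w1 = 1" unfolding z1_def w1_def using u1 by (simp add: complex_eq_iff power2_eq_square)
  have zw2: "z2*w2 = 1" unfolding z2_def w2_def using u2 by (simp add: complex_eq_iff power2_eq_square)
  have zw3: "z3*w3 = 1" unfolding z3_def w3_def using u3 by (simp add: complex_eq_iff power2_eq_square)
  have x1: "2*x1 = z1 + w1" unfolding z1_def w1_def x1_def by (simp add: complex_eq_iff)
  have x2: "2*x2 = z2 + w2" unfolding z2_def w2_def x2_def by (simp add: complex_eq_iff)
  have x3: "2*x3 = z3 + w3" unfolding z3_def w3_def x3_def by (simp add: complex_eq_iff)
  have y1: "2*\<i>*y1 = z1 - w1" unfolding z1_def w1_def y1_def by (simp add: complex_eq_iff)
  have y2: "2*\<i>*y2 = z2 - w2" unfolding z2_def w2_def y2_def by (simp add: complex_eq_iff)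
  have y3: "2*\<i>*y3 = z3 - w3" unfolding z3_def w3_def y3_def by (simp add: complex_eq_iff)
  have ii: "\<i>*\<i> = -1" by simp
  have n12: "z1 \<noteq> z2" using d12 unfolding z1_def z2_def by (simp add: complex_eq_iff)
  have n13: "z1 \<noteq> z3" using d13 unfolding z1_def z3_def by (simp add: complex_eq_iff)
  have n23: "z2 \<noteq> z3" using d23 unfolding z2_def z3_def by (simp add: complex_eq_iff)
  have F1c: "(x1*x2+y1*y2) - (x1*x3+y1*y3) - Q*(x1*x2 - y1*y2) + Q*(x1*x3 - y1*y3) = 0"
    unfolding x1_def x2_def x3_def y1_def y2_def y3_def Q_def
    using arg_cong[OF F1, of complex_of_real] by simp
  have F2c: "(x2*x1+y2*y1) - (x2*x3+y2*y3) - Q*(x2*x1 - y2*y1) + Q*(x2*x3 - y2*y3) = 0"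
    unfolding x1_def x2_def x3_def y1_def y2_def y3_def Q_def
    using arg_cong[OF F2, of complex_of_real] by simp
  have G1: "(z2-z3)*(z1^2 - z2*z3 + Q*z1*(z1*z2*z3) - Q) = 0"
    using F1c x1 x2 x3 y1 y2 y3 zw1 zw2 zw3 ii by algebra
  have G2: "(z1-z3)*(z2^2 - z1*z3 + Q*z2*(z1*z2*z3) - Q) = 0"
    using F2c x1 x2 x3 y1 y2 y3 zw1 zw2 zw3 ii by algebra
  have G1': "z1^2 - z2*z3 + Q*z1*(z1*z2*z3) - Q = 0" using G1 n23 by simp
  have G2': "z2^2 - z1*z3 + Q*z2*(z1*z2*z3) - Q = 0" using G2 n13 by simp
  have "(z1-z2)*(z1+z2+z3 + Q*(z1*z2*z3)) = 0" using G1' G2' by algebra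
  hence e1: "z1+z2+z3 = - Q*(z1*z2*z3)" using n12 by (simp add: eq_neg_iff_add_eq_0)
  have e2: "z1*z2+z1*z3+z2*z3 = -Q" using G1' e1 by algebra
  have cQ: "cnj Q = Q" unfolding Q_def by simp
  have e1c: "w1+w2+w3 = - Q*(w1*w2*w3)" unfolding w1_def w2_def w3_def
    using arg_cong[OF e1, of cnj] cQ by simp
  have e2c: "w1*w2+w1*w3+w2*w3 = -Q" unfolding w1_def w2_def w3_def
    using arg_cong[OF e2, of cnj] cQ by simp
  define \<tau> where "\<tau> = Re (z1*z2*z3)"
  have tau: "2*complex_of_real \<tau> = z1*z2*z3 + w1*w2*w3"
    unfolding \<tau>_def w1_def w2_def w3_def apply (simp add: complex_eq_iff) by (intro conjI; algebra)
  define T where "T = complex_of_real \<tau>"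
  have tau': "2*T = z1*z2*z3 + w1*w2*w3" using tau T_def by simp
  have s1: "x1+x2+x3 = -Q*T" using x1 x2 x3 e1 e1c tau' by algebra
  have s2: "4*(x1*x2+x1*x3+x2*x3) = Q^2-2*Q-3"
    using x1 x2 x3 e1 e1c e2 e2c zw1 zw2 zw3 by algebra
  have s2s: "4*(y1*y2+y1*y3+y2*y3) = Q^2+2*Q-3"
    using y1 y2 y3 e1 e1c e2 e2c zw1 zw2 zw3 ii by algebra
  have s3: "4*(x1*x2*x3) = T*(1+Q)^2"
    using x1 x2 x3 e1 e1c e2 e2c zw1 zw2 zw3 tau' by algebra
  show ?thesis
  proof (intro exI conjI)
    have "complex_of_real (C1+C2+C3) = complex_of_real (-q*\<tau>)"
      using s1 by (simp add: x1_def x2_def x3_def Q_def T_def)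
    thus "C1+C2+C3 = -q*\<tau>" by (simp only: of_real_eq_iff)
    have "complex_of_real (4*(C1*C2+C1*C3+C2*C3)) = complex_of_real (q^2-2*q-3)"
      using s2 by (simp add: x1_def x2_def x3_def Q_def)
    thus "4*(C1*C2+C1*C3+C2*C3) = q^2-2*q-3" by (simp only: of_real_eq_iff)
    have "complex_of_real (4*(S1*S2+S1*S3+S2*S3)) = complex_of_real (q^2+2*q-3)"
      using s2s by (simp add: y1_def y2_def y3_def Q_def)
    thus "4*(S1*S2+S1*S3+S2*S3) = q^2+2*q-3" by (simp only: of_real_eq_iff)
    have "complex_of_real (4*(C1*C2*C3)) = complex_of_real (\<tau>*(1+q)^2)"
      using s3 by (simp add: x1_def x2_def x3_def Q_def T_def)
    thus "4*(C1*C2*C3) = \<tau>*(1+q)^2" by (simp only: of_real_eq_iff)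
  qed
qed



lemma dist_focus:
  assumes ab: "a > b" "b > 0" and u: "C^2+S^2=1" and c: "c = sqrt (a^2-b^2)"
  shows "dist (a*C, b*S) (-c, 0) = a + c*C" "a + c*C > 0"
proof -
  have "b^2 \<le> a^2" using ab by (intro power_mono) auto
  hence c2: "c^2 = a^2 - b^2" using c by simp
  have c0: "c \<ge> 0" using c \<open>b^2 \<le> a^2\<close> by simp
  have "c^2 < a^2" using c2 ab by simp
  hence ca: "c < a" using c0 ab by (smt (verit) power_mono)
  have "C^2 \<le> 1" using u by (smt (verit) zero_le_power2)
  hence "\<bar>C\<bar> \<le> 1" by (simp add: abs_square_le_1)
  hence "-1 \<le> C" by linarith
  hence "c*(-1) \<le> c*C" using c0 by (rule mult_left_mono)
  hence "c*C \<ge> -c" by simp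
  thus pos: "a + c*C > 0" using ca by linarith
  have "(a*C - -c)^2 + (b*S - 0)^2 = (a + c*C)^2" using u c2 by algebra
  hence "dist (a*C, b*S) (-c, 0) = sqrt ((a + c*C)^2)"
    by (simp add: dist_prod_def dist_real_def)
  thus "dist (a*C, b*S) (-c, 0) = a + c*C" using pos by simp
qed

lemma final_alg:
  fixes a b c \<delta> q \<tau> C1 C2 C3 :: real
  assumes c2: "c^2 = a^2 - b^2" and c0: "c \<noteq> 0" and d2: "\<delta>^2 = a^4 - a^2*b^2 + b^4"
    and qd: "c^2*q + a^2 + b^2 = 2*\<delta>"
    and s1: "C1+C2+C3 = -q*\<tau>" and s2: "4*(C1*C2+C1*C3+C2*C3) = q^2-2*q-3"
    and s3: "4*(C1*C2*C3) = \<tau>*(1+q)^2"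
  shows "a*b^2*((a+c*C1)*(a+c*C2) + (a+c*C1)*(a+c*C3) + (a+c*C2)*(a+c*C3))
       = (a^2+b^2+\<delta>)*((a+c*C1)*(a+c*C2)*(a+c*C3))"
  using assms by algebra


theorem mainTheorem6:
  fixes a b \<rho> :: real and P1 P2 P3 :: "real \<times> real"
  assumes "a > b" "b > 0" "\<rho> > 0"
    and "three_periodic a b P1 P2 P3"
  defines "c \<equiv> sqrt (a^2 - b^2)"
    and "\<delta> \<equiv> sqrt (a^4 - a^2 * b^2 + b^4)"
  defines "f1 \<equiv> (- c, 0)"
  shows "1 / dist P1 f1 + 1 / dist P2 f1 + 1 / dist P3 f1 = (a^2 + b^2 + \<delta>) / (a * b^2)
       \<and> dist (inv_pt f1 \<rho> P1) f1 + dist (inv_pt f1 \<rho> P2) f1 + dist (inv_pt f1 \<rho> P3) f1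
           = \<rho>^2 * (a^2 + b^2 + \<delta>) / (a * b^2)"
proof -
  note ab = assms(1,2)
  have a0: "a > 0" using ab by simp
  have tp: "P1 \<noteq> P2" "P2 \<noteq> P3" "P1 \<noteq> P3" "on_ellipse a b P1" "on_ellipse a b P2" "on_ellipse a b P3"
    "normal_bisects a b P1 P2 P3" "normal_bisects a b P2 P3 P1"
    using assms(4) unfolding three_periodic_def by auto
  define C1 where "C1 = fst P1 / a"
  define C2 where "C2 = fst P2 / a"
  define C3 where "C3 = fst P3 / a"
  define S1 where "S1 = snd P1 / b"
  define S2 where "S2 = snd P2 / b"
  define S3 where "S3 = snd P3 / b"
  have P1: "P1 = (a*C1, b*S1)" unfolding C1_def S1_def using a0 ab by (simp add: prod_eq_iff)
  have P2: "P2 = (a*C2, b*S2)" unfolding C2_def S2_def using a0 ab by (simp add: prod_eq_iff)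
  have P3: "P3 = (a*C3, b*S3)" unfolding C3_def S3_def using a0 ab by (simp add: prod_eq_iff)
  have u1: "C1^2+S1^2=1" using tp(4) unfolding on_ellipse_def C1_def S1_def by (simp add: power_divide)
  have u2: "C2^2+S2^2=1" using tp(5) unfolding on_ellipse_def C2_def S2_def by (simp add: power_divide)
  have u3: "C3^2+S3^2=1" using tp(6) unfolding on_ellipse_def C3_def S3_def by (simp add: power_divide)
  have d12: "(C1,S1) \<noteq> (C2,S2)" using tp(1) P1 P2 by auto
  have d23: "(C2,S2) \<noteq> (C3,S3)" using tp(2) P2 P3 by auto
  have d13: "(C1,S1) \<noteq> (C3,S3)" using tp(3) P1 P3 by auto
  have B1: "Dq C1 S1 C2 S2 * Mq a b C1 S1 C3 S3 = Dq C1 S1 C3 S3 * Mq a b C1 S1 C2 S2"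
    by (rule bisect_key[OF ab u1 u2 u3]) (use d12 d13 tp(7) P1 P2 P3 in auto)
  have B2: "Dq C2 S2 C3 S3 * Mq a b C2 S2 C1 S1 = Dq C2 S2 C1 S1 * Mq a b C2 S2 C3 S3"
    by (rule bisect_key[OF ab u2 u3 u1]) (use d12 d23 tp(8) P1 P2 P3 in auto)
  have sD: "Dq C2 S2 C1 S1 = Dq C1 S1 C2 S2" unfolding Dq_def by (simp add: power2_commute)
  have sM: "Mq a b C2 S2 C1 S1 = Mq a b C1 S1 C2 S2" unfolding Mq_def by (simp add: algebra_simps)
  have D12: "Dq C1 S1 C2 S2 > 0" using Dq_pos d12 by auto
  have M12: "Mq a b C1 S1 C2 S2 > 0" using Mq_pos ab u1 u2 by blast
  have M13: "Mq a b C1 S1 C3 S3 > 0" using Mq_pos ab u1 u3 by blast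
  have M23: "Mq a b C2 S2 C3 S3 > 0" using Mq_pos ab u2 u3 by blast
  define \<kappa> where "\<kappa> = Dq C1 S1 C2 S2 / Mq a b C1 S1 C2 S2"
  have k0: "\<kappa> > 0" unfolding \<kappa>_def using D12 M12 by simp
  have E12: "Dq C1 S1 C2 S2 = \<kappa> * Mq a b C1 S1 C2 S2" unfolding \<kappa>_def using M12 by simp
  have E13: "Dq C1 S1 C3 S3 = \<kappa> * Mq a b C1 S1 C3 S3" unfolding \<kappa>_def using M12 B1
    by (simp add: field_simps)
  have E23: "Dq C2 S2 C3 S3 = \<kappa> * Mq a b C2 S2 C3 S3"
  proof -
    have "Dq C2 S2 C3 S3 * Mq a b C1 S1 C2 S2 = Dq C1 S1 C2 S2 * Mq a b C2 S2 C3 S3"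
      using B2 sD sM by simp
    thus ?thesis unfolding \<kappa>_def using M12 by (simp add: field_simps)
  qed
  have b2a2: "b^2 \<le> a^2" using ab by (intro power_mono) auto
  have c2: "c^2 = a^2 - b^2" unfolding c_def using b2a2 by simp
  have "b^2 < a^2" using ab by (intro power_strict_mono) auto
  hence cpos: "c > 0" unfolding c_def by simp
  define q where "q = \<kappa> * c^2 / 4"
  have q4: "4*q = \<kappa>*(a^2-b^2)" unfolding q_def c2 by simp
  have F1: "(C1*C2+S1*S2) - (C1*C3+S1*S3) - q*(C1*C2 - S1*S2) + q*(C1*C3 - S1*S3) = 0"
    using E12 E13 u1 u2 u3 q4 unfolding Dq_def Mq_def by algebra
  have F2: "(C2*C1+S2*S1) - (C2*C3+S2*S3) - q*(C2*C1 - S2*S1) + q*(C2*C3 - S2*S3) = 0"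
    using E12 E23 u1 u2 u3 q4 unfolding Dq_def Mq_def by algebra
  obtain \<tau> where s1: "C1+C2+C3 = -q*\<tau>" and s2: "4*(C1*C2+C1*C3+C2*C3) = q^2-2*q-3"
      and s2s: "4*(S1*S2+S1*S3+S2*S3) = q^2+2*q-3" and s3: "4*(C1*C2*C3) = \<tau>*(1+q)^2"
    using core[OF u1 u2 u3 d12 d13 d23 F1 F2] by blast
  have kb: "\<kappa>*b^2 = 3 - 2*q - q^2"
    using E12 E13 E23 u1 u2 u3 q4 s2 s2s unfolding Dq_def Mq_def by algebra
  have qeq: "c^2*q^2 + 2*q*(a^2+b^2) - 3*c^2 = 0"
    using kb q_def c2 by algebra
  have dnn: "a^4 - a^2*b^2 + b^4 \<ge> 0"
  proof -
    have "a^4 - a^2*b^2 + b^4 = (a^2 - b^2)^2 + a^2*b^2" by algebra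
    moreover have "(a^2 - b^2)^2 + a^2*b^2 \<ge> 0" by simp
    ultimately show ?thesis by linarith
  qed
  have ddef: "\<delta>^2 = a^4 - a^2*b^2 + b^4" unfolding \<delta>_def using dnn by (rule real_sqrt_pow2)
  have dpos: "\<delta> \<ge> 0" unfolding \<delta>_def using dnn by simp
  have qpos: "q > 0" unfolding q_def using k0 cpos by simp
  have "(c^2*q + a^2 + b^2 - 2*\<delta>)*(c^2*q + a^2 + b^2 + 2*\<delta>) = 0"
    using qeq ddef c2 by algebra
  moreover have "c^2*q + a^2 + b^2 + 2*\<delta> > 0" using qpos cpos dpos a0
    by (simp add: add_pos_nonneg add_pos_pos)
  ultimately have qd: "c^2*q + a^2 + b^2 = 2*\<delta>" by simp
  have key: "a*b^2*((a+c*C1)*(a+c*C2) + (a+c*C1)*(a+c*C3) + (a+c*C2)*(a+c*C3))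
       = (a^2+b^2+\<delta>)*((a+c*C1)*(a+c*C2)*(a+c*C3))"
    by (rule final_alg[OF c2 _ ddef qd s1 s2 s3]) (use cpos in simp)
  have dist1: "dist P1 f1 = a + c*C1" "a + c*C1 > 0" unfolding P1 f1_def using dist_focus[OF ab u1 c_def[THEN meta_eq_to_obj_eq]] by auto
  have dist2: "dist P2 f1 = a + c*C2" "a + c*C2 > 0" unfolding P2 f1_def using dist_focus[OF ab u2 c_def[THEN meta_eq_to_obj_eq]] by auto
  have dist3: "dist P3 f1 = a + c*C3" "a + c*C3 > 0" unfolding P3 f1_def using dist_focus[OF ab u3 c_def[THEN meta_eq_to_obj_eq]] by auto
  have sum: "1 / dist P1 f1 + 1 / dist P2 f1 + 1 / dist P3 f1 = (a^2 + b^2 + \<delta>) / (a * b^2)"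
  proof -
    define d1 where "d1 = a + c*C1"
    define d2 where "d2 = a + c*C2"
    define d3 where "d3 = a + c*C3"
    have p: "d1 > 0" "d2 > 0" "d3 > 0" using dist1(2) dist2(2) dist3(2) d1_def d2_def d3_def by auto
    have k: "a*b^2*(d1*d2+d1*d3+d2*d3) = (a^2+b^2+\<delta>)*(d1*d2*d3)" using key d1_def d2_def d3_def by simp
    have "1/d1+1/d2+1/d3 = (d1*d2+d1*d3+d2*d3)/(d1*d2*d3)" using p by (simp add: field_simps)
    also have "\<dots> = (a^2+b^2+\<delta>)/(a*b^2)"
    proof (subst frac_eq_eq)
      show "d1*d2*d3 \<noteq> 0" using p by simp
      show "a*b^2 \<noteq> 0" using a0 ab(2) by simp
      show "(d1*d2+d1*d3+d2*d3)*(a*b^2) = (a^2+b^2+\<delta>)*(d1*d2*d3)" using k by (simp add: mult.commute)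
    qed
    finally show ?thesis unfolding dist1(1) dist2(1) dist3(1) d1_def d2_def d3_def .
  qed
  have inv: "dist (inv_pt f1 \<rho> P) f1 = \<rho>^2 * (1 / dist P f1)" if "dist P f1 > 0" for P
  proof -
    have "dist (inv_pt f1 \<rho> P) f1 = norm (((\<rho> / dist P f1)^2) *\<^sub>R (P - f1))"
      unfolding inv_pt_def by (simp add: dist_norm)
    also have "\<dots> = (\<rho> / dist P f1)^2 * dist P f1" by (simp add: dist_norm)
    also have "\<dots> = \<rho>^2 * (1 / dist P f1)" using that by (simp add: power2_eq_square field_simps)
    finally show ?thesis .
  qed
  have "dist (inv_pt f1 \<rho> P1) f1 + dist (inv_pt f1 \<rho> P2) f1 + dist (inv_pt f1 \<rho> P3) f1
      = \<rho>^2 * (1 / dist P1 f1 + 1 / dist P2 f1 + 1 / dist P3 f1)"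
  proof -
    have i1: "dist (inv_pt f1 \<rho> P1) f1 = \<rho>^2 * (1 / dist P1 f1)" by (rule inv) (simp add: dist1)
    have i2: "dist (inv_pt f1 \<rho> P2) f1 = \<rho>^2 * (1 / dist P2 f1)" by (rule inv) (simp add: dist2)
    have i3: "dist (inv_pt f1 \<rho> P3) f1 = \<rho>^2 * (1 / dist P3 f1)" by (rule inv) (simp add: dist3)
    show ?thesis unfolding i1 i2 i3 by (simp only: distrib_left)
  qed
  also have "\<dots> = \<rho>^2 * (a^2 + b^2 + \<delta>) / (a * b^2)" using sum by simp
  finally show ?thesis using sum by simp
qed

end
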